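(* Both the randomized and the deterministic query complexity of $TARSKI(2,k)$ are $\Theta(k)$; that is, there are constants $0<c_1\le c_2$ such that for every $k\in\mathbb{N}$, each of these complexities lies between $c_1 k$ and $c_2 k$.
   Context: $TARSKI(2,k)$: given oracle access to an unknown monotone function $f:\{0,1\}^k\to\{0,1\}^k$ (monotone with respect to the componentwise order: $a\le b$ iff $a_i\le b_i$ for all $i$, implies $f(a)\le f(b)$), where a query of $v$ returns $f(v)$, find $x$ with $f(x)=x$. The deterministic query complexity is the minimum over deterministic algorithms always finding a fixed point of the worst-case number of queries. The randomized query complexity is the minimum, over randomized algorithms that on every input output a fixed point with probability at least $9/10$, of the worst-case expected number of queries (expectation over the algorithm's coins). *)

theory Defs
  imports "HOL-Probability.Probability"
begin

definition cube :: "nat \<Rightarrow> bool list set" where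
  "cube k = {x. length x = k}"

definition leq_cw :: "bool list \<Rightarrow> bool list \<Rightarrow> bool" where
  "leq_cw a b \<longleftrightarrow> list_all2 (\<le>) a b"

definition tarski_instances :: "nat \<Rightarrow> (bool list \<Rightarrow> bool list) set" where
  "tarski_instances k = {f. (\<forall>x\<in>cube k. f x \<in> cube k) \<and>
      (\<forall>a\<in>cube k. \<forall>b\<in>cube k. leq_cw a b \<longrightarrow> leq_cw (f a) (f b))}"

definition is_fixed_point :: "nat \<Rightarrow> (bool list \<Rightarrow> bool list) \<Rightarrow> bool list \<Rightarrow> bool" where
  "is_fixed_point k f x \<longleftrightarrow> x \<in> cube k \<and> f x = x"

text \<open>Deterministic query algorithms = decision trees: either output a point,
  or query a point and continue depending on the answer.\<close>
datatype 'a qtree = Leaf 'a | Query 'a "'a \<Rightarrow> 'a qtree"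

primrec run_output :: "'a qtree \<Rightarrow> ('a \<Rightarrow> 'a) \<Rightarrow> 'a" where
  "run_output (Leaf x) f = x"
| "run_output (Query v t) f = run_output (t (f v)) f"

primrec run_queries :: "'a qtree \<Rightarrow> ('a \<Rightarrow> 'a) \<Rightarrow> nat" where
  "run_queries (Leaf x) f = 0"
| "run_queries (Query v t) f = Suc (run_queries (t (f v)) f)"

definition det_correct :: "nat \<Rightarrow> bool list qtree \<Rightarrow> bool" where
  "det_correct k T \<longleftrightarrow> (\<forall>f\<in>tarski_instances k. is_fixed_point k f (run_output T f))"

definition det_query_complexity :: "nat \<Rightarrow> ennreal" where
  "det_query_complexity k =
     (INF T\<in>{T. det_correct k T}. SUP f\<in>tarski_instances k. of_nat (run_queries T f))"

definition rand_correct :: "nat \<Rightarrow> bool list qtree pmf \<Rightarrow> bool" where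
  "rand_correct k A \<longleftrightarrow> (\<forall>f\<in>tarski_instances k.
      measure_pmf.prob A {T. is_fixed_point k f (run_output T f)} \<ge> 9/10)"

definition rand_query_complexity :: "nat \<Rightarrow> ennreal" where
  "rand_query_complexity k =
     (INF A\<in>{A. rand_correct k A}. SUP f\<in>tarski_instances k.
        \<integral>\<^sup>+ T. of_nat (run_queries T f) \<partial>(measure_pmf A))"

end

theory Submission
  imports Defs
begin

fun H :: "bool list \<Rightarrow> bool list \<Rightarrow> bool list" where
  "H [] x = []"
| "H (c#b) [] = c # replicate (length b) c"
| "H (c#b) (y#x) = c # (if y = c then H b x else replicate (length b) y)"

definition hardf :: "bool list \<Rightarrow> bool list \<Rightarrow> bool list" where
  "hardf b x = (if length x = length b then H b x else x)"

lemma length_H[simp]: "length (H b x) = length b"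
  by (induction b x rule: H.induct) auto

lemma leq_cw_repl_True: "length x = n \<Longrightarrow> leq_cw x (replicate n True)"
  unfolding leq_cw_def by (induction x arbitrary: n) (auto simp: list_all2_Cons1)

lemma leq_cw_repl_False: "length x = n \<Longrightarrow> leq_cw (replicate n False) x"
  unfolding leq_cw_def by (induction x arbitrary: n) (auto simp: list_all2_Cons2)

lemma leq_cw_refl: "leq_cw x x"
  unfolding leq_cw_def by (simp add: list_all2_refl)

lemma leq_cw_Cons[simp]: "leq_cw (a#x) (b#y) \<longleftrightarrow> a \<le> b \<and> leq_cw x y"
  unfolding leq_cw_def by simp

lemma H_mono: "length x = length b \<Longrightarrow> length y = length b \<Longrightarrow> leq_cw x y \<Longrightarrow> leq_cw (H b x) (H b y)"
proof (induction b arbitrary: x y)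
  case Nil
  then show ?case by (simp add: leq_cw_def)
next
  case (Cons c b)
  then obtain x1 x' y1 y' where xy: "x = x1#x'" "y = y1#y'"
    by (metis length_Suc_conv)
  show ?case using Cons xy
    by (cases x1; cases y1; cases c) (auto simp: leq_cw_refl leq_cw_repl_True leq_cw_repl_False)
qed

lemma H_self: "H b b = b"
  by (induction b) auto

lemma H_fix_unique: "length x = length b \<Longrightarrow> H b x = x \<Longrightarrow> x = b"
proof (induction b arbitrary: x)
  case Nil then show ?case by simp
next
  case (Cons c b)
  then obtain y x' where "x = y#x'" by (metis length_Suc_conv)
  with Cons show ?case by (cases "y = c") auto
qed

lemma hardf_inst: "b \<in> cube k \<Longrightarrow> hardf b \<in> tarski_instances k"
proof -
  assume b: "b \<in> cube k"
  have "hardf b x \<in> cube k" if "x \<in> cube k" for x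
    using b that unfolding cube_def hardf_def by simp
  moreover have "leq_cw (hardf b x) (hardf b y)" if "x \<in> cube k" "y \<in> cube k" "leq_cw x y" for x y
    using b that H_mono[of x b y] unfolding cube_def hardf_def by simp
  ultimately show ?thesis unfolding tarski_instances_def by blast
qed

lemma hardf_fix_iff: "b \<in> cube k \<Longrightarrow> is_fixed_point k (hardf b) x \<longleftrightarrow> x = b"
  unfolding is_fixed_point_def cube_def hardf_def using H_fix_unique[of x b] H_self[of b] by auto

lemma H_append_same: "H (w@u) (w@v) = w @ H u v"
  by (induction w) auto

lemma H_diverge: "c \<noteq> d \<Longrightarrow> H (c#u) (d#v) = c # replicate (length u) d"
  by auto

lemma H_nonprefix: "length v = length w + length u \<Longrightarrow> take (length w) v \<noteq> w \<Longrightarrow>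
   length u' = length u \<Longrightarrow> H (w@u) v = H (w@u') v"
proof (induction w arbitrary: v)
  case Nil then show ?case by simp
next
  case (Cons c w)
  then obtain y v' where "v = y#v'" by (metis length_Suc_conv add_Suc)
  with Cons show ?case by (cases "y = c") auto
qed

lemma finite_cube: "finite (cube n)"
  unfolding cube_def using finite_lists_length_eq[of "UNIV::bool set" n] by simp

lemma card_cube: "card (cube n) = 2 ^ n"
  unfolding cube_def using card_lists_length_eq[of "UNIV::bool set" n] by simp

definition G :: "bool list qtree \<Rightarrow> bool list \<Rightarrow> nat \<Rightarrow> bool" where
  "G T b t \<longleftrightarrow> run_output T (hardf b) = b \<and> run_queries T (hardf b) \<le> t"

lemma cube_split: "{u \<in> cube (Suc m). Q u} \<subseteq> Cons d ` {u \<in> cube m. Q (d#u)} \<union> Cons (\<not>d) ` {u \<in> cube m. Q ((\<not>d)#u)}"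
proof
  fix u assume "u \<in> {u \<in> cube (Suc m). Q u}"
  then obtain c u' where "u = c#u'" "length u' = m" "Q u" unfolding cube_def by (auto simp: length_Suc_conv)
  then show "u \<in> Cons d ` {u \<in> cube m. Q (d#u)} \<union> Cons (\<not>d) ` {u \<in> cube m. Q ((\<not>d)#u)}"
    unfolding cube_def by (cases "c = d") auto
qed

lemma fin_sub: "finite {u \<in> cube m. P u}"
  by (rule finite_subset[OF _ finite_cube[of m]]) auto

lemma card_split: "real (card {u \<in> cube (Suc m). Q u}) \<le> real (card {u \<in> cube m. Q (d#u)}) + real (card {u \<in> cube m. Q ((\<not>d)#u)})"
proof -
  have "card {u \<in> cube (Suc m). Q u} \<le> card (Cons d ` {u \<in> cube m. Q (d#u)} \<union> Cons (\<not>d) ` {u \<in> cube m. Q ((\<not>d)#u)})"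
    by (rule card_mono[OF _ cube_split]) (simp add: fin_sub)
  also have "\<dots> \<le> card (Cons d ` {u \<in> cube m. Q (d#u)}) + card (Cons (\<not>d) ` {u \<in> cube m. Q ((\<not>d)#u)})"
    by (rule card_Un_le)
  also have "\<dots> \<le> card {u \<in> cube m. Q (d#u)} + card {u \<in> cube m. Q ((\<not>d)#u)}"
    by (intro add_mono card_image_le) (auto intro!: finite_subset[OF _ finite_cube])
  finally show ?thesis by linarith
qed


lemma G_Query_Suc: "G (Query v s) b (Suc t) = G (s (hardf b v)) b t"
  unfolding G_def by simp

lemma G_Query_0: "\<not> G (Query v s) b 0"
  unfolding G_def by simp

lemma ar1: "(0::real) \<le> b \<Longrightarrow> 3^t * b \<le> 3 ^ Suc t * b"
  by (rule mult_right_mono) simp_all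
lemma ar2g: "(0::real) \<le> a \<Longrightarrow> 0 \<le> b \<Longrightarrow> a * (2 * b - 1) \<le> 3 * a * b"
proof -
  assume "0 \<le> a" "0 \<le> b"
  then have "0 \<le> a * b" by simp
  moreover have "a * (2 * b - 1) = 2 * (a * b) - a" "3 * a * b = 3 * (a * b)" by (simp_all add: algebra_simps)
  ultimately show ?thesis using \<open>0 \<le> a\<close> by linarith
qed
lemma ar2: "(0::real) \<le> b \<Longrightarrow> 3^t * (2 * b - 1) \<le> 3 ^ Suc t * b"
  using ar2g[of "3^t" b] by (simp add: mult.assoc)
lemma ar3: "(a::real) * (2 * c - 1) + a * c = a * (2 * ((3/2) * c) - 1)"
  by (simp add: algebra_simps)
lemma ar3': "(3::real)^t * (2 * (3/2)^m - 1) + 3^t * (3/2)^m = 3^t * (2 * (3/2)^Suc m - 1)"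
  using ar3[of "3^t" "(3/2)^m"] by (simp only: power_Suc)

lemma inner:
  assumes IH: "\<And>a w n t. real (card {u \<in> cube n. G (s a) (w@u) t}) \<le> 3^t * (3/2)^n"
  shows "length v' = n \<Longrightarrow> w @ v' = v \<Longrightarrow>
    real (card {u \<in> cube n. G (Query v s) (w@u) (Suc t)}) \<le> 3^t * (2 * (3/2)^n - 1)"
proof (induction n arbitrary: w v')
  case 0
  have "card {u \<in> cube 0. G (Query v s) (w@u) (Suc t)} \<le> card {[]::bool list}"
    by (rule card_mono) (auto simp: cube_def)
  then have "real (card {u \<in> cube 0. G (Query v s) (w@u) (Suc t)}) \<le> 1" by simp
  also have "1 \<le> (3::real)^t" by simp
  finally show ?case by simp
next
  case (Suc m)
  then obtain d v'' where dv: "v' = d # v''" "length v'' = m" by (metis length_Suc_conv)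
  let ?Q = "\<lambda>u. G (Query v s) (w@u) (Suc t)"
  have wv: "(w@[d]) @ v'' = v" using Suc.prems dv by simp
  have A0: "real (card {u \<in> cube m. G (Query v s) ((w@[d])@u) (Suc t)}) \<le> 3^t * (2 * (3/2)^m - 1)"
    by (rule Suc.IH[OF dv(2) wv])
  have A: "real (card {u \<in> cube m. ?Q (d#u)}) \<le> 3^t * (2 * (3/2)^m - 1)"
    using A0 by simp
  have lenv: "length v = length w + Suc m" using Suc.prems by auto
  have vv: "v = w @ d # v''" using Suc.prems dv by simp
  have eqB: "?Q ((\<not>d)#u) = G (s (w @ (\<not>d) # replicate m d)) ((w@[\<not>d])@u) t" if "u \<in> cube m" for u
  proof -
    have l: "length v = length (w @ (\<not>d) # u)" using that lenv unfolding cube_def by simp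
    have "hardf (w @ (\<not>d) # u) v = H (w @ (\<not>d) # u) v"
      unfolding hardf_def using l by simp
    also have "\<dots> = w @ H ((\<not>d) # u) (d # v'')" unfolding vv by (rule H_append_same)
    also have "\<dots> = w @ (\<not>d) # replicate m d" using that unfolding cube_def by simp
    finally show ?thesis by (simp add: G_Query_Suc)
  qed
  have B: "real (card {u \<in> cube m. ?Q ((\<not>d)#u)}) \<le> 3^t * (3/2)^m"
  proof -
    have "{u \<in> cube m. ?Q ((\<not>d)#u)} = {u \<in> cube m. G (s (w @ (\<not>d) # replicate m d)) ((w@[\<not>d])@u) t}"
      using eqB by blast
    moreover have "real (card {u \<in> cube m. G (s (w @ (\<not>d) # replicate m d)) ((w@[\<not>d])@u) t}) \<le> 3^t * (3/2)^m"
      by (rule IH)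
    ultimately show ?thesis by simp
  qed
  have "real (card {u \<in> cube (Suc m). ?Q u}) \<le> real (card {u \<in> cube m. ?Q (d#u)}) + real (card {u \<in> cube m. ?Q ((\<not>d)#u)})"
    by (rule card_split)
  also have "\<dots> \<le> 3^t * (2 * (3/2)^m - 1) + 3^t * (3/2)^m" using A B by linarith
  also have "\<dots> = 3^t * (2 * (3/2)^Suc m - 1)" by (rule ar3')
  finally show ?case .
qed

lemma count_main:
  "\<forall>w n t. real (card {u \<in> cube n. G T (w@u) t}) \<le> 3^t * (3/2)^n"
proof (induction T)
  case (Leaf x)
  show ?case
  proof (intro allI)
    fix w n t
    have "{u \<in> cube n. G (Leaf x) (w@u) t} \<subseteq> {drop (length w) x}"
      unfolding G_def by auto
    then have "card {u \<in> cube n. G (Leaf x) (w@u) t} \<le> card {drop (length w) x}"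
      by (rule card_mono[rotated]) simp
    then have "real (card {u \<in> cube n. G (Leaf x) (w@u) t}) \<le> 1" by simp
    also have "(1::real) \<le> 3^t * (3/2)^n"
      using mult_mono[of 1 "(3::real)^t" 1 "(3/2)^n"] by simp
    finally show "real (card {u \<in> cube n. G (Leaf x) (w@u) t}) \<le> 3^t * (3/2)^n" .
  qed
next
  case (Query v s)
  have IH: "\<And>a w n t. real (card {u \<in> cube n. G (s a) (w@u) t}) \<le> 3^t * (3/2)^n"
    using Query.IH by blast
  show ?case
  proof (intro allI)
    fix w n t
    show "real (card {u \<in> cube n. G (Query v s) (w@u) t}) \<le> 3^t * (3/2)^n"
    proof (cases t)
      case 0
      then show ?thesis by (simp add: G_Query_0)
    next
      case (Suc t')
      have pos: "(0::real) \<le> 3^t' * (3/2)^n" by simp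
      show ?thesis
      proof (cases "length v = length w + n")
        case False
        have "{u \<in> cube n. G (Query v s) (w@u) t} = {u \<in> cube n. G (s v) (w@u) t'}"
        proof -
          have h: "\<And>u. u \<in> cube n \<Longrightarrow> hardf (w@u) v = v"
          proof -
            fix u assume "u \<in> cube n"
            then have "length u = n" unfolding cube_def by simp
            then have "length v \<noteq> length (w@u)" using False by simp
            then show "hardf (w@u) v = v" unfolding hardf_def by (simp only: if_False)
          qed
          show ?thesis unfolding Suc G_Query_Suc using h by (intro Collect_cong conj_cong refl) simp
        qed
        moreover have "real (card {u \<in> cube n. G (s v) (w@u) t'}) \<le> 3^t' * (3/2)^n"
          by (rule IH)
        ultimately have "real (card {u \<in> cube n. G (Query v s) (w@u) t}) \<le> 3^t' * (3/2)^n"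
          by simp
        also have "\<dots> \<le> 3^t * (3/2)^n" unfolding Suc by (rule ar1) simp
        finally show ?thesis .
      next
        case True
        show ?thesis
        proof (cases "take (length w) v = w")
          case False
          define a0 where "a0 = H (w @ replicate n False) v"
          have "{u \<in> cube n. G (Query v s) (w@u) t} = {u \<in> cube n. G (s a0) (w@u) t'}"
          proof -
            have h: "\<And>u. u \<in> cube n \<Longrightarrow> hardf (w@u) v = a0"
            proof -
              fix u assume "u \<in> cube n"
              then have lu: "length u = n" unfolding cube_def by simp
              then have l: "length v = length (w@u)" using True by simp
              have "H (w@u) v = H (w @ replicate n False) v"
                by (rule H_nonprefix) (use True False lu in simp_all)
              then show "hardf (w@u) v = a0" unfolding hardf_def a0_def using l by simp
            qed
            show ?thesis unfolding Suc G_Query_Suc using h by (intro Collect_cong conj_cong refl) simp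
          qed
          moreover have "real (card {u \<in> cube n. G (s a0) (w@u) t'}) \<le> 3^t' * (3/2)^n"
            by (rule IH)
          ultimately have "real (card {u \<in> cube n. G (Query v s) (w@u) t}) \<le> 3^t' * (3/2)^n"
            by simp
          also have "\<dots> \<le> 3^t * (3/2)^n" unfolding Suc by (rule ar1) simp
          finally show ?thesis .
        next
          case True2: True
          define v' where "v' = drop (length w) v"
          have wv: "w @ v' = v" unfolding v'_def using True2 by (metis append_take_drop_id)
          have lv: "length v' = n" unfolding v'_def using True by simp
          have "real (card {u \<in> cube n. G (Query v s) (w@u) t}) \<le> 3^t' * (2 * (3/2)^n - 1)"
            unfolding Suc by (rule inner[OF IH lv wv])
          also have "\<dots> \<le> 3^t * (3/2)^n" unfolding Suc by (rule ar2) simp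
          finally show ?thesis .
        qed
      qed
    qed
  qed
qed


primrec iter_tree :: "nat \<Rightarrow> bool list \<Rightarrow> bool list qtree" where
  "iter_tree 0 x = Leaf x"
| "iter_tree (Suc n) x = Query x (\<lambda>y. iter_tree n y)"

lemma iter_tree_run: "run_output (iter_tree n x) f = (f ^^ n) x \<and> run_queries (iter_tree n x) f = n"
  by (induction n arbitrary: x) (simp_all add: funpow_swap1)

definition cnt :: "bool list \<Rightarrow> nat" where "cnt x = length (filter id x)"

lemma leq_cnt: "leq_cw a b \<Longrightarrow> cnt a \<le> cnt b \<and> (a \<noteq> b \<longrightarrow> cnt a < cnt b)"
  unfolding leq_cw_def cnt_def
proof (induction rule: list_all2_induct)
  case Nil then show ?case by simp
next
  case (Cons x xs y ys)
  then show ?case by (cases x; cases y) auto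
qed

lemma cnt_le_length: "cnt x \<le> length x"
  unfolding cnt_def by simp

lemma cnt_full: "length x = k \<Longrightarrow> k \<le> cnt x \<Longrightarrow> x = replicate k True"
  unfolding cnt_def
proof (induction x arbitrary: k)
  case Nil then show ?case by simp
next
  case (Cons a x)
  show ?case
  proof (cases a)
    case True
    then show ?thesis using Cons.IH[of "k - 1"] Cons.prems by auto
  next
    case False
    have "length (filter (\<lambda>a. a) x) \<le> length x" by (rule length_filter_le)
    moreover have "k \<le> length (filter (\<lambda>a. a) x)" using False Cons.prems(2) by simp
    moreover have "k = Suc (length x)" using Cons.prems(1) by simp
    ultimately show ?thesis by linarith
  qed
qed

lemma tarski_iter:
  assumes f: "f \<in> tarski_instances k"
  shows "is_fixed_point k f ((f ^^ k) (replicate k False))"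
proof -
  define x where "x j = (f ^^ j) (replicate k False)" for j
  have fc: "\<And>y. y \<in> cube k \<Longrightarrow> f y \<in> cube k" and
       fm: "\<And>a b. a \<in> cube k \<Longrightarrow> b \<in> cube k \<Longrightarrow> leq_cw a b \<Longrightarrow> leq_cw (f a) (f b)"
    using f unfolding tarski_instances_def by auto
  have xs: "x (Suc j) = f (x j)" for j by (simp add: x_def)
  have xc: "x j \<in> cube k" for j
  proof (induction j)
    case 0 then show ?case by (simp add: x_def cube_def)
  next
    case (Suc j) then show ?case using fc[OF Suc.IH] xs[of j] by simp
  qed
  have xm: "leq_cw (x j) (x (Suc j))" for j
  proof (induction j)
    case 0
    show ?case using xc[of 1] unfolding x_def cube_def by (simp add: leq_cw_repl_False)
  next
    case (Suc j)
    then show ?case using fm[OF xc xc] xs by metis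
  qed
  have P: "f (x j) = x j \<or> j \<le> cnt (x j)" for j
  proof (induction j)
    case 0 then show ?case by simp
  next
    case (Suc j)
    show ?case
    proof (cases "f (x j) = x j")
      case True then show ?thesis using xs by simp
    next
      case False
      then have "cnt (x j) < cnt (x (Suc j))" using leq_cnt[OF xm[of j]] xs by metis
      then show ?thesis using Suc False by simp
    qed
  qed
  have "f (x k) = x k"
  proof (cases "f (x k) = x k")
    case False
    then have "k \<le> cnt (x k)" using P by blast
    then have full: "x k = replicate k True" using cnt_full xc[of k] unfolding cube_def by blast
    have "leq_cw (x k) (f (x k))" using xm[of k] xs by metis
    moreover have "cnt (f (x k)) \<le> k" using cnt_le_length[of "f (x k)"] fc[OF xc[of k]] unfolding cube_def by simp
    moreover have "cnt (x k) = k" using full unfolding cnt_def by simp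
    ultimately have "f (x k) = x k" using leq_cnt by fastforce
    then show ?thesis .
  qed
  then show ?thesis using xc[of k] unfolding is_fixed_point_def x_def by simp
qed

lemma det_upper: "det_query_complexity k \<le> of_nat k"
proof -
  let ?T = "iter_tree k (replicate k False)"
  have c: "det_correct k ?T" unfolding det_correct_def using iter_tree_run tarski_iter by simp
  have "det_query_complexity k \<le> (SUP f\<in>tarski_instances k. of_nat (run_queries ?T f))"
    unfolding det_query_complexity_def by (rule INF_lower) (use c in simp)
  also have "\<dots> \<le> of_nat k" by (rule SUP_least) (simp add: iter_tree_run)
  finally show ?thesis .
qed

lemma rand_le_det: "rand_query_complexity k \<le> det_query_complexity k"
  unfolding det_query_complexity_def
proof (rule INF_greatest)
  fix T assume "T \<in> {T. det_correct k T}"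
  then have c: "det_correct k T" by simp
  have rc: "rand_correct k (return_pmf T)"
    unfolding rand_correct_def using c unfolding det_correct_def by (simp add: indicator_def)
  have "rand_query_complexity k \<le> (SUP f\<in>tarski_instances k. \<integral>\<^sup>+ T'. of_nat (run_queries T' f) \<partial>(measure_pmf (return_pmf T)))"
    unfolding rand_query_complexity_def by (rule INF_lower) (use rc in simp)
  also have "\<dots> = (SUP f\<in>tarski_instances k. of_nat (run_queries T f))"
    by simp
  finally show "rand_query_complexity k \<le> (SUP f\<in>tarski_instances k. of_nat (run_queries T f))" .
qed


lemma arith_bound: "1 \<le> k \<Longrightarrow> (3::real)^(k div 10) * (3/2)^k \<le> 3/4 * 2^k"
proof -
  assume k: "1 \<le> k"
  define t where "t = k div 10"
  define r where "r = k mod 10"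
  have kk: "k = 10 * t + r" unfolding t_def r_def by simp
  have e1: "(3/2::real)^k = (3/4)^k * 2^k" by (simp add: power_mult_distrib[symmetric])
  have e2: "(3/4::real)^k = ((3/4)^10)^t * (3/4)^r" unfolding kk by (simp add: power_add power_mult)
  have e3: "(3::real)^t * ((3/4)^10)^t = (3 * (3/4)^10)^t" by (simp add: power_mult_distrib)
  have a: "3 * (3/4::real)^10 \<le> 3/4" by (simp add: power_divide)
  have a0: "0 \<le> 3 * (3/4::real)^10" by simp
  have main: "(3::real)^t * (3/4)^k \<le> 3/4"
  proof (cases t)
    case 0
    then have "r = k" using kk by simp
    then have "1 \<le> r" using k by simp
    then have "(3/4::real)^r \<le> (3/4)^1" by (intro power_decreasing) simp_all
    then show ?thesis using 0 e2 by simp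
  next
    case (Suc t')
    have "(3 * (3/4::real)^10)^t \<le> (3 * (3/4)^10)^1"
      using Suc a by (intro power_decreasing) simp_all
    also have "\<dots> \<le> 3/4" using a by simp
    finally have b: "(3 * (3/4::real)^10)^t \<le> 3/4" .
    have c: "(3/4::real)^r \<le> 1" by (simp add: power_le_one)
    have "(3::real)^t * (3/4)^k = (3 * (3/4)^10)^t * (3/4)^r" using e2 e3 by (simp add: mult.assoc)
    also have "\<dots> \<le> 3/4 * 1" by (rule mult_mono[OF b c]) simp_all
    finally show ?thesis by simp
  qed
  have "(3::real)^t * (3/2)^k = ((3::real)^t * (3/4)^k) * 2^k" using e1 by simp
  also have "\<dots> \<le> 3/4 * 2^k" by (rule mult_right_mono[OF main]) simp
  finally show ?thesis unfolding t_def .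
qed


lemma card_as_sum:
  assumes fin: "finite B"
  shows "(of_nat (card {b\<in>B. Q b T0}) :: ennreal) = (\<Sum>b\<in>B. indicator {T. Q b T} T0)"
proof -
  have "(\<Sum>b\<in>B. indicator {T. Q b T} T0 :: ennreal) = (\<Sum>b\<in>B. if Q b T0 then 1 else 0)"
    by (intro sum.cong) (auto simp: indicator_def)
  also have "\<dots> = (\<Sum>b\<in>{b\<in>B. Q b T0}. 1)" by (rule sum.inter_filter[symmetric]) (rule fin)
  also have "\<dots> = of_nat (card {b\<in>B. Q b T0})" by simp
  finally show ?thesis by simp
qed

lemma rand_lower_A:
  assumes k1: "1 \<le> k" and A: "rand_correct k A"
  shows "ennreal (real k / 100) \<le> (SUP f\<in>tarski_instances k. \<integral>\<^sup>+T. of_nat (run_queries T f) \<partial>A)"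
proof -
  define B where "B = cube k"
  define t where "t = k div 10"
  define N where "N = (2::real)^k"
  define S where "S = (SUP f\<in>tarski_instances k. \<integral>\<^sup>+T. of_nat (run_queries T f) \<partial>A)"
  define rq where "rq T b = run_queries T (hardf b)" for T b
  define late where "late T = card {b\<in>B. t < rq T b}" for T
  define succ where "succ T = card {b\<in>B. run_output T (hardf b) = b}" for T
  have finB: "finite B" unfolding B_def by (rule finite_cube)
  have cardB: "real (card B) = N" unfolding B_def N_def card_cube by simp
  have Npos: "0 < N" unfolding N_def by simp
  have le1: "(\<integral>\<^sup>+T. of_nat (rq T b) \<partial>A) \<le> S" if "b \<in> B" for b
    unfolding S_def rq_def by (rule SUP_upper) (rule hardf_inst, use that B_def in simp)
  have s2: "(\<Sum>b\<in>B. \<integral>\<^sup>+T. of_nat (rq T b) \<partial>A) \<le> ennreal N * S"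
  proof -
    have "(\<Sum>b\<in>B. \<integral>\<^sup>+T. of_nat (rq T b) \<partial>A) \<le> (\<Sum>b\<in>B. S)" by (rule sum_mono) (rule le1)
    also have "\<dots> = of_nat (card B) * S" by simp
    also have "of_nat (card B) = ennreal N" using cardB by (simp add: ennreal_of_nat_eq_real_of_nat)
    finally show ?thesis .
  qed
  have s3: "(\<Sum>b\<in>B. \<integral>\<^sup>+T. of_nat (rq T b) \<partial>A) = \<integral>\<^sup>+T. (\<Sum>b\<in>B. of_nat (rq T b)) \<partial>A"
    by (rule nn_integral_sum[symmetric]) simp
  have s4: "ennreal (real (t+1)) * ennreal (real (late T)) \<le> (\<Sum>b\<in>B. of_nat (rq T b))" for T
  proof -
    have "(t+1) * late T = (\<Sum>b\<in>{b\<in>B. t < rq T b}. t+1)" unfolding late_def by simp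
    also have "\<dots> \<le> (\<Sum>b\<in>{b\<in>B. t < rq T b}. rq T b)" by (rule sum_mono) simp
    also have "\<dots> \<le> (\<Sum>b\<in>B. rq T b)" by (rule sum_mono2) (use finB in auto)
    finally have "real ((t+1) * late T) \<le> real (\<Sum>b\<in>B. rq T b)" by linarith
    then have "ennreal (real ((t+1) * late T)) \<le> ennreal (real (\<Sum>b\<in>B. rq T b))" by (rule ennreal_leI)
    moreover have "ennreal (real (t+1)) * ennreal (real (late T)) = ennreal (real ((t+1) * late T))"
      by (metis ennreal_mult of_nat_0_le_iff of_nat_mult)
    moreover have "(\<Sum>b\<in>B. of_nat (rq T b) :: ennreal) = ennreal (real (\<Sum>b\<in>B. rq T b))"
      unfolding of_nat_sum[symmetric] by (rule ennreal_of_nat_eq_real_of_nat)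
    ultimately show ?thesis by simp
  qed
  have s5: "real (succ T) \<le> real (late T) + 3/4 * N" for T
  proof -
    have "{b\<in>B. run_output T (hardf b) = b} \<subseteq> {b\<in>B. t < rq T b} \<union> {u\<in>cube k. G T ([]@u) t}"
      unfolding B_def G_def rq_def by auto
    then have "succ T \<le> card ({b\<in>B. t < rq T b} \<union> {u\<in>cube k. G T ([]@u) t})"
      unfolding succ_def by (rule card_mono[rotated]) (use finB in \<open>auto simp: fin_sub\<close>)
    also have "\<dots> \<le> late T + card {u\<in>cube k. G T ([]@u) t}" unfolding late_def by (rule card_Un_le)
    finally have "real (succ T) \<le> real (late T) + real (card {u\<in>cube k. G T ([]@u) t})" by linarith
    moreover have "real (card {u\<in>cube k. G T ([]@u) t}) \<le> 3^t * (3/2)^k" using count_main by blast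
    moreover have "(3::real)^t * (3/2)^k \<le> 3/4 * N" unfolding t_def N_def by (rule arith_bound[OF k1])
    ultimately show ?thesis by linarith
  qed
  have s6: "ennreal (9/10 * N) \<le> \<integral>\<^sup>+T. ennreal (real (succ T)) \<partial>A"
  proof -
    have "(\<integral>\<^sup>+T. ennreal (real (succ T)) \<partial>A) = (\<integral>\<^sup>+T. (\<Sum>b\<in>B. indicator {T. run_output T (hardf b) = b} T) \<partial>A)"
    proof (rule nn_integral_cong)
      fix T
      show "ennreal (real (succ T)) = (\<Sum>b\<in>B. indicator {T. run_output T (hardf b) = b} T)"
        unfolding succ_def ennreal_of_nat_eq_real_of_nat[symmetric]
        by (rule card_as_sum[OF finB, of "\<lambda>b T. run_output T (hardf b) = b"])
    qed
    also have "\<dots> = (\<Sum>b\<in>B. emeasure A {T. run_output T (hardf b) = b})"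
      by (subst nn_integral_sum) simp_all
    also have "\<dots> \<ge> (\<Sum>b\<in>B. ennreal (9/10))"
    proof (rule sum_mono)
      fix b assume b: "b \<in> B"
      have "9/10 \<le> measure_pmf.prob A {T. is_fixed_point k (hardf b) (run_output T (hardf b))}"
        using A hardf_inst[of b k] b unfolding rand_correct_def B_def by blast
      also have "{T. is_fixed_point k (hardf b) (run_output T (hardf b))} = {T. run_output T (hardf b) = b}"
        using hardf_fix_iff[of b k] b unfolding B_def by blast
      finally show "ennreal (9/10) \<le> emeasure A {T. run_output T (hardf b) = b}"
        by (simp add: measure_pmf.emeasure_eq_measure ennreal_leI)
    qed
    finally have "(\<Sum>b\<in>B. ennreal (9/10)) \<le> \<integral>\<^sup>+T. ennreal (real (succ T)) \<partial>A" .
    moreover have "(\<Sum>b\<in>B. ennreal (9/10)) = ennreal (9/10 * N)"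
    proof -
      have "(\<Sum>b\<in>B. ennreal (9/10)) = of_nat (card B) * ennreal (9/10)" by simp
      also have "\<dots> = ennreal (real (card B)) * ennreal (9/10)" by (simp only: ennreal_of_nat_eq_real_of_nat)
      also have "\<dots> = ennreal (real (card B) * (9/10))" by (rule ennreal_mult[symmetric]) simp_all
      finally show ?thesis by (simp add: cardB mult.commute)
    qed
    ultimately show ?thesis by simp
  qed
  define L where "L = \<integral>\<^sup>+T. ennreal (real (late T)) \<partial>A"
  have s7: "ennreal (3/20 * N) \<le> L"
  proof -
    have "(\<integral>\<^sup>+T. ennreal (real (succ T)) \<partial>A) \<le> (\<integral>\<^sup>+T. (ennreal (real (late T)) + ennreal (3/4 * N)) \<partial>A)"
    proof (rule nn_integral_mono)
      fix T
      have "ennreal (real (succ T)) \<le> ennreal (real (late T) + 3/4 * N)" by (rule ennreal_leI[OF s5])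
      also have "\<dots> = ennreal (real (late T)) + ennreal (3/4 * N)" by (rule ennreal_plus) (use Npos in simp_all)
      finally show "ennreal (real (succ T)) \<le> ennreal (real (late T)) + ennreal (3/4 * N)" .
    qed
    also have "\<dots> = L + ennreal (3/4 * N)"
    proof -
      have "(\<integral>\<^sup>+T. (ennreal (real (late T)) + ennreal (3/4 * N)) \<partial>A) = L + (\<integral>\<^sup>+T. ennreal (3/4 * N) \<partial>A)"
        unfolding L_def by (rule nn_integral_add) simp_all
      also have "(\<integral>\<^sup>+T. ennreal (3/4 * N) \<partial>A) = ennreal (3/4 * N)"
        by (simp only: nn_integral_const measure_pmf.emeasure_space_1 mult_1_right)
      finally show ?thesis .
    qed
    finally have "ennreal (9/10 * N) \<le> L + ennreal (3/4 * N)" using s6 by simp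
    moreover have "ennreal (9/10 * N) = ennreal (3/4 * N) + ennreal (3/20 * N)"
      using Npos by (simp add: ennreal_plus[symmetric])
    ultimately have "ennreal (3/4 * N) + ennreal (3/20 * N) \<le> ennreal (3/4 * N) + L"
      by (simp add: add.commute)
    then show ?thesis by (simp add: ennreal_add_left_cancel_le)
  qed
  have s8: "ennreal ((real (t+1)) * (3/20 * N)) \<le> ennreal N * S"
  proof -
    have "ennreal ((real (t+1)) * (3/20 * N)) = ennreal (real (t+1)) * ennreal (3/20 * N)"
      by (rule ennreal_mult) (use Npos in simp_all)
    also have "\<dots> \<le> ennreal (real (t+1)) * L" using s7 by (rule mult_left_mono) simp
    also have "\<dots> = \<integral>\<^sup>+T. ennreal (real (t+1)) * ennreal (real (late T)) \<partial>A"
      unfolding L_def by (subst nn_integral_cmult) simp_all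
    also have "\<dots> \<le> \<integral>\<^sup>+T. (\<Sum>b\<in>B. of_nat (rq T b)) \<partial>A"
      by (rule nn_integral_mono) (rule s4)
    also have "\<dots> \<le> ennreal N * S" using s2 s3 by simp
    finally show ?thesis .
  qed
  have s9: "ennreal ((real (t+1)) * (3/20)) \<le> S"
  proof -
    have "ennreal N * ennreal ((real (t+1)) * (3/20)) = ennreal ((real (t+1)) * (3/20 * N))"
      using Npos by (simp add: ennreal_mult''[symmetric] algebra_simps)
    then have "ennreal N * ennreal ((real (t+1)) * (3/20)) \<le> ennreal N * S" using s8 by simp
    then show ?thesis using Npos by (subst (asm) ennreal_mult_le_mult_iff) simp_all
  qed
  have "real k / 100 \<le> real (t+1) * (3/20)"
  proof -
    have "k < 10 * (t+1)" unfolding t_def by presburger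
    then have "real k \<le> 10 * real (t+1)" by linarith
    then show ?thesis by simp
  qed
  then have "ennreal (real k / 100) \<le> ennreal ((real (t+1)) * (3/20))" by (rule ennreal_leI)
  also note s9
  finally show ?thesis unfolding S_def .
qed


lemma rand_lower: "ennreal ((1/100) * real k) \<le> rand_query_complexity k"
proof (cases "k = 0")
  case True then show ?thesis by simp
next
  case False
  then have k1: "1 \<le> k" by simp
  show ?thesis unfolding rand_query_complexity_def
  proof (rule INF_greatest)
    fix A assume "A \<in> {A. rand_correct k A}"
    then have "rand_correct k A" by simp
    from rand_lower_A[OF k1 this]
    show "ennreal ((1/100) * real k) \<le> (SUP f\<in>tarski_instances k. \<integral>\<^sup>+T. of_nat (run_queries T f) \<partial>A)"
      by simp
  qed
qed

theorem corollary2: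
  shows "\<exists>c1 c2 :: real. 0 < c1 \<and> c1 \<le> c2 \<and>
    (\<forall>k::nat.
       ennreal (c1 * real k) \<le> rand_query_complexity k \<and>
       rand_query_complexity k \<le> ennreal (c2 * real k) \<and>
       ennreal (c1 * real k) \<le> det_query_complexity k \<and>
       det_query_complexity k \<le> ennreal (c2 * real k))"
proof (intro exI conjI allI)
  fix k :: nat
  have du: "det_query_complexity k \<le> ennreal (1 * real k)"
    using det_upper[of k] by (simp add: ennreal_of_nat_eq_real_of_nat)
  show "ennreal ((1/100) * real k) \<le> rand_query_complexity k" by (rule rand_lower)
  show "rand_query_complexity k \<le> ennreal (1 * real k)" using rand_le_det[of k] du by (rule order_trans)
  show "ennreal ((1/100) * real k) \<le> det_query_complexity k" using rand_lower[of k] rand_le_det[of k] by (rule order_trans)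
  show "det_query_complexity k \<le> ennreal (1 * real k)" by (rule du)
qed simp_all

end
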